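(* Let $(H,+,\circ)$ be a commutative multiplicative hyperring with identity and let $P$ be a strong $\mathcal{C}$-hyperideal of $H$. Then: (i) if $K\subseteq H$ is a multiplicative hyperring (under the restricted operations) and $P$ is an sdf-absorbing hyperideal of $H$, then $P\cap K$ is an sdf-absorbing hyperideal of $K$; (ii) if $Q$ is a hyperideal of $H$ with $Q\subseteq P$ and $P$ is an sdf-absorbing hyperideal of $H$, then $P/Q$ is an sdf-absorbing hyperideal of $H/Q$; (iii) if $Q$ is a hyperideal of $H$ with $Q\subsetneq P$, then $P$ is an sdf-absorbing hyperideal of $H$ if and only if $P/Q$ is an sdf-absorbing hyperideal of $H/Q$.
   Context: A commutative multiplicative hyperring $(H,+,\circ)$ consists of an abelian group $(H,+)$ and an associative, commutative hyperoperation $\circ: H\times H\to P^*(H)$ with $x\circ(y+z)\subseteq x\circ y+x\circ z$ and $x\circ(-y)=-(x\circ y)=(-x)\circ y$. For subsets $A,B$, $A\circ B=\bigcup_{a\in A,b\in B}a\circ b$, $A\pm B=\{a\pm b\}$; $x^2=x\circ x$. Identity: $x\in x\circ 1$ for all $x$. A hyperideal is a nonempty $P$ with $x-y\in P$ and $r\circ x\subseteq P$ for $x,y\in P$, $r\in H$. For a hyperideal $Q$, $H/Q=\{x+Q\}$ with coset addition and $(x+Q)*(y+Q)=\{z+Q: z\in x\circ y\}$, and $P/Q=\{x+Q: x\in P\}$. Let $\mathcal{C}=\{c_1\circ\cdots\circ c_n: c_i\in H\}$ and $\mathfrak{C}=\{\sum_{i=1}^m C_i: C_i\in\mathcal{C}\}$;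 $P$ is a strong $\mathcal{C}$-hyperideal if for every $D\in\mathfrak{C}$, $D\cap P\neq\varnothing$ implies $D\subseteq P$. A proper hyperideal $P$ is sdf-absorbing if whenever $0\neq x,y$ and $x^2-y^2\subseteq P$, then $x-y\in P$ or $x+y\in P$. *)

theory Defs
  imports Main
begin

record 'a mhr =
  carrier :: "'a set"
  add :: "'a \<Rightarrow> 'a \<Rightarrow> 'a"
  zero :: 'a
  neg :: "'a \<Rightarrow> 'a"
  hmul :: "'a \<Rightarrow> 'a \<Rightarrow> 'a set"

definition sub :: "('a, 'b) mhr_scheme \<Rightarrow> 'a \<Rightarrow> 'a \<Rightarrow> 'a" where
  "sub R x y = add R x (neg R y)"

definition set_add :: "('a, 'b) mhr_scheme \<Rightarrow> 'a set \<Rightarrow> 'a set \<Rightarrow> 'a set" where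
  "set_add R A B = {add R a b | a b. a \<in> A \<and> b \<in> B}"

definition set_sub :: "('a, 'b) mhr_scheme \<Rightarrow> 'a set \<Rightarrow> 'a set \<Rightarrow> 'a set" where
  "set_sub R A B = {sub R a b | a b. a \<in> A \<and> b \<in> B}"

definition set_mul :: "('a, 'b) mhr_scheme \<Rightarrow> 'a set \<Rightarrow> 'a set \<Rightarrow> 'a set" where
  "set_mul R A B = (\<Union>a\<in>A. \<Union>b\<in>B. hmul R a b)"

definition comm_mult_hyperring :: "('a, 'b) mhr_scheme \<Rightarrow> bool" where
  "comm_mult_hyperring R \<longleftrightarrow>
     \<comment> \<open>(carrier, add) is an abelian group\<close>
     (\<forall>x\<in>carrier R. \<forall>y\<in>carrier R. add R x y \<in> carrier R) \<and>
     (\<forall>x\<in>carrier R. \<forall>y\<in>carrier R. \<forall>z\<in>carrier R. add R (add R x y) z = add R x (add R y z)) \<and>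
     (\<forall>x\<in>carrier R. \<forall>y\<in>carrier R. add R x y = add R y x) \<and>
     zero R \<in> carrier R \<and>
     (\<forall>x\<in>carrier R. add R x (zero R) = x) \<and>
     (\<forall>x\<in>carrier R. neg R x \<in> carrier R \<and> add R x (neg R x) = zero R) \<and>
     \<comment> \<open>hyperoperation into nonempty subsets of the carrier\<close>
     (\<forall>x\<in>carrier R. \<forall>y\<in>carrier R. hmul R x y \<subseteq> carrier R \<and> hmul R x y \<noteq> {}) \<and>
     \<comment> \<open>associativity and commutativity\<close>
     (\<forall>x\<in>carrier R. \<forall>y\<in>carrier R. \<forall>z\<in>carrier R.
        set_mul R (hmul R x y) {z} = set_mul R {x} (hmul R y z)) \<and>
     (\<forall>x\<in>carrier R. \<forall>y\<in>carrier R. hmul R x y = hmul R y x) \<and>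
     \<comment> \<open>distributivity (inclusion)\<close>
     (\<forall>x\<in>carrier R. \<forall>y\<in>carrier R. \<forall>z\<in>carrier R.
        hmul R x (add R y z) \<subseteq> set_add R (hmul R x y) (hmul R x z)) \<and>
     \<comment> \<open>sign rules\<close>
     (\<forall>x\<in>carrier R. \<forall>y\<in>carrier R.
        hmul R x (neg R y) = neg R ` (hmul R x y) \<and> hmul R (neg R x) y = neg R ` (hmul R x y))"

definition has_identity :: "('a, 'b) mhr_scheme \<Rightarrow> bool" where
  "has_identity R \<longleftrightarrow> (\<exists>e\<in>carrier R. \<forall>x\<in>carrier R. x \<in> hmul R x e)"

definition hyperideal :: "('a, 'b) mhr_scheme \<Rightarrow> 'a set \<Rightarrow> bool" where
  "hyperideal R P \<longleftrightarrow> P \<subseteq> carrier R \<and> P \<noteq> {} \<and>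
     (\<forall>x\<in>P. \<forall>y\<in>P. sub R x y \<in> P) \<and>
     (\<forall>r\<in>carrier R. \<forall>x\<in>P. hmul R r x \<subseteq> P)"

text \<open>Iterated hyperproducts c1 o ... o cn (n >= 1) and finite sums of such sets.\<close>

fun set_prod_list :: "('a, 'b) mhr_scheme \<Rightarrow> 'a set \<Rightarrow> 'a list \<Rightarrow> 'a set" where
  "set_prod_list R A [] = A"
| "set_prod_list R A (d # ds) = set_prod_list R (set_mul R A {d}) ds"

fun set_sum_list :: "('a, 'b) mhr_scheme \<Rightarrow> 'a set \<Rightarrow> 'a set list \<Rightarrow> 'a set" where
  "set_sum_list R A [] = A"
| "set_sum_list R A (B # Bs) = set_sum_list R (set_add R A B) Bs"

definition prod_sets :: "('a, 'b) mhr_scheme \<Rightarrow> 'a set set" where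
  "prod_sets R = {set_prod_list R {c} cs | c cs. c \<in> carrier R \<and> set cs \<subseteq> carrier R}"

definition sum_prod_sets :: "('a, 'b) mhr_scheme \<Rightarrow> 'a set set" where
  "sum_prod_sets R = {set_sum_list R C Cs | C Cs. C \<in> prod_sets R \<and> set Cs \<subseteq> prod_sets R}"

definition strong_C_hyperideal :: "('a, 'b) mhr_scheme \<Rightarrow> 'a set \<Rightarrow> bool" where
  "strong_C_hyperideal R P \<longleftrightarrow> hyperideal R P \<and>
     (\<forall>D\<in>sum_prod_sets R. D \<inter> P \<noteq> {} \<longrightarrow> D \<subseteq> P)"

definition sdf_absorbing :: "('a, 'b) mhr_scheme \<Rightarrow> 'a set \<Rightarrow> bool" where
  "sdf_absorbing R P \<longleftrightarrow> hyperideal R P \<and> P \<noteq> carrier R \<and>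
     (\<forall>x\<in>carrier R. \<forall>y\<in>carrier R. x \<noteq> zero R \<longrightarrow> y \<noteq> zero R \<longrightarrow>
        set_sub R (hmul R x x) (hmul R y y) \<subseteq> P \<longrightarrow>
        sub R x y \<in> P \<or> add R x y \<in> P)"

definition coset :: "('a, 'b) mhr_scheme \<Rightarrow> 'a set \<Rightarrow> 'a \<Rightarrow> 'a set" where
  "coset R Q x = {add R x q | q. q \<in> Q}"

definition quot_set :: "('a, 'b) mhr_scheme \<Rightarrow> 'a set \<Rightarrow> 'a set \<Rightarrow> 'a set set" where
  "quot_set R Q P = coset R Q ` P"

text \<open>(x+Q) * (y+Q) = {z + Q | z in x o y}; taken over all representatives, which
  gives the same set for a hyperideal Q.\<close>

definition quot :: "('a, 'b) mhr_scheme \<Rightarrow> 'a set \<Rightarrow> 'a set mhr" where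
  "quot R Q = \<lparr> carrier = quot_set R Q (carrier R),
               add = (\<lambda>A B. set_add R A B),
               zero = Q,
               neg = (\<lambda>A. neg R ` A),
               hmul = (\<lambda>A B. coset R Q ` (\<Union>a\<in>A. \<Union>b\<in>B. hmul R a b)) \<rparr>"

end

theory Submission
  imports Defs
begin

locale cmh = fixes R :: "('a,'b) mhr_scheme" assumes H: "comm_mult_hyperring R"
begin

lemmas A = H[unfolded comm_mult_hyperring_def]
lemmas A1 = conjunct1[OF A]
lemmas A2 = conjunct1[OF conjunct2[OF A]]
lemmas A3 = conjunct1[OF conjunct2[OF conjunct2[OF A]]]
lemmas A4 = conjunct1[OF conjunct2[OF conjunct2[OF conjunct2[OF A]]]]
lemmas A5 = conjunct1[OF conjunct2[OF conjunct2[OF conjunct2[OF conjunct2[OF A]]]]]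
lemmas A6 = conjunct1[OF conjunct2[OF conjunct2[OF conjunct2[OF conjunct2[OF conjunct2[OF A]]]]]]
lemmas A7 = conjunct1[OF conjunct2[OF conjunct2[OF conjunct2[OF conjunct2[OF conjunct2[OF conjunct2[OF A]]]]]]]
lemmas A8 = conjunct1[OF conjunct2[OF conjunct2[OF conjunct2[OF conjunct2[OF conjunct2[OF conjunct2[OF conjunct2[OF A]]]]]]]]
lemmas A9 = conjunct1[OF conjunct2[OF conjunct2[OF conjunct2[OF conjunct2[OF conjunct2[OF conjunct2[OF conjunct2[OF conjunct2[OF A]]]]]]]]]
lemmas A10 = conjunct1[OF conjunct2[OF conjunct2[OF conjunct2[OF conjunct2[OF conjunct2[OF conjunct2[OF conjunct2[OF conjunct2[OF conjunct2[OF A]]]]]]]]]]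

lemma add_closed[simp]: "x \<in> carrier R \<Longrightarrow> y \<in> carrier R \<Longrightarrow> add R x y \<in> carrier R"
  using A1 by blast
lemma add_assoc: "x \<in> carrier R \<Longrightarrow> y \<in> carrier R \<Longrightarrow> z \<in> carrier R \<Longrightarrow> add R (add R x y) z = add R x (add R y z)"
  using A2 by blast
lemma add_comm: "x \<in> carrier R \<Longrightarrow> y \<in> carrier R \<Longrightarrow> add R x y = add R y x"
  using A3 by blast
lemma zero_closed[simp]: "zero R \<in> carrier R"
  using A4 by blast
lemma add_zero_r[simp]: "x \<in> carrier R \<Longrightarrow> add R x (zero R) = x"
  using A5 by blast
lemma add_zero_l[simp]: "x \<in> carrier R \<Longrightarrow> add R (zero R) x = x"
  using add_comm add_zero_r zero_closed by metis
lemma neg_closed[simp]: "x \<in> carrier R \<Longrightarrow> neg R x \<in> carrier R"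
  using A6 by blast
lemma add_neg_r[simp]: "x \<in> carrier R \<Longrightarrow> add R x (neg R x) = zero R"
  using A6 by blast
lemma add_neg_l[simp]: "x \<in> carrier R \<Longrightarrow> add R (neg R x) x = zero R"
  using add_comm add_neg_r neg_closed by metis
lemma hmul_closed: "x \<in> carrier R \<Longrightarrow> y \<in> carrier R \<Longrightarrow> hmul R x y \<subseteq> carrier R"
  using A7 by blast
lemma hmul_ne: "x \<in> carrier R \<Longrightarrow> y \<in> carrier R \<Longrightarrow> hmul R x y \<noteq> {}"
  using A7 by blast
lemma hmul_comm: "x \<in> carrier R \<Longrightarrow> y \<in> carrier R \<Longrightarrow> hmul R x y = hmul R y x"
  using A9 by blast
lemma distr: "x \<in> carrier R \<Longrightarrow> y \<in> carrier R \<Longrightarrow> z \<in> carrier R \<Longrightarrow>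
        hmul R x (add R y z) \<subseteq> set_add R (hmul R x y) (hmul R x z)"
  using A10 by blast

lemma add_4: assumes "a \<in> carrier R" "b \<in> carrier R" "c \<in> carrier R" "d \<in> carrier R"
  shows "add R (add R a b) (add R c d) = add R (add R a c) (add R b d)"
proof -
  have "add R (add R a b) (add R c d) = add R a (add R b (add R c d))" using assms by (simp add: add_assoc)
  also have "add R b (add R c d) = add R c (add R b d)"
    using assms add_assoc add_comm by (metis add_closed)
  also have "add R a (add R c (add R b d)) = add R (add R a c) (add R b d)" using assms by (simp add: add_assoc)
  finally show ?thesis .
qed

lemma sub_closed[simp]: "x \<in> carrier R \<Longrightarrow> y \<in> carrier R \<Longrightarrow> sub R x y \<in> carrier R"
  by (simp add: sub_def)

lemma add_cancel_l: assumes "a \<in> carrier R" "x \<in> carrier R" "y \<in> carrier R" "add R a x = add R a y"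
  shows "x = y"
proof -
  have e: "add R (neg R a) (add R a z) = z" if "z \<in> carrier R" for z
    using that assms(1) add_assoc[of "neg R a" a z] by simp
  show ?thesis using e[of x] e[of y] assms by metis
qed

lemma neg_neg[simp]: "x \<in> carrier R \<Longrightarrow> neg R (neg R x) = x"
  by (metis add_cancel_l add_neg_l add_neg_r neg_closed)

lemma neg_add: assumes "x \<in> carrier R" "y \<in> carrier R"
  shows "neg R (add R x y) = add R (neg R x) (neg R y)"
proof (rule add_cancel_l[of "add R x y"])
  have "add R (add R x y) (add R (neg R x) (neg R y)) = add R x (add R (add R y (neg R x)) (neg R y))"
    using assms by (simp add: add_assoc)
  also have "\<dots> = add R x (add R (add R (neg R x) y) (neg R y))" using assms by (simp add: add_comm)
  also have "\<dots> = zero R" using assms by (simp add: add_assoc[symmetric])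
  finally show "add R (add R x y) (neg R (add R x y)) = add R (add R x y) (add R (neg R x) (neg R y))"
    using assms by simp
qed (use assms in auto)

lemma neg_zero[simp]: "neg R (zero R) = zero R"
  by (metis add_neg_l add_zero_r neg_closed zero_closed)

lemma sub_add_cancel: "x \<in> carrier R \<Longrightarrow> y \<in> carrier R \<Longrightarrow> add R (sub R x y) y = x"
  by (simp add: sub_def add_assoc)

lemma add_sub_cancel: "x \<in> carrier R \<Longrightarrow> y \<in> carrier R \<Longrightarrow> sub R (add R x y) y = x"
  by (simp add: sub_def add_assoc)

end

locale cmh_ideal = cmh + fixes I assumes I: "hyperideal R I"
begin
lemma I_sub: "I \<subseteq> carrier R" using I unfolding hyperideal_def by blast
lemma I_carr: "x \<in> I \<Longrightarrow> x \<in> carrier R" using I_sub by blast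
lemma I_sub_closed: "x \<in> I \<Longrightarrow> y \<in> I \<Longrightarrow> sub R x y \<in> I" using I unfolding hyperideal_def by blast
lemma I_mul: "r \<in> carrier R \<Longrightarrow> x \<in> I \<Longrightarrow> hmul R r x \<subseteq> I" using I unfolding hyperideal_def by blast
lemma I_zero: "zero R \<in> I"
proof -
  obtain x where "x \<in> I" using I unfolding hyperideal_def by blast
  thus ?thesis using I_sub_closed[of x x] I_carr by (simp add: sub_def)
qed
lemma I_neg: "x \<in> I \<Longrightarrow> neg R x \<in> I"
  using I_sub_closed[OF I_zero, of x] I_carr by (simp add: sub_def)
lemma I_add: "x \<in> I \<Longrightarrow> y \<in> I \<Longrightarrow> add R x y \<in> I"
  using I_sub_closed[of x "neg R y"] I_neg I_carr by (simp add: sub_def)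
lemma I_cancel: "x \<in> I \<Longrightarrow> y \<in> carrier R \<Longrightarrow> add R x y \<in> I \<Longrightarrow> y \<in> I"
  by (metis I_add I_carr I_neg add_assoc add_neg_l add_zero_l neg_closed)
lemma I_cancel2: "x \<in> I \<Longrightarrow> y \<in> carrier R \<Longrightarrow> add R y x \<in> I \<Longrightarrow> y \<in> I"
  by (metis I_cancel I_carr add_comm)
lemma I_sub_cancel: "x \<in> I \<Longrightarrow> y \<in> carrier R \<Longrightarrow> sub R y x \<in> I \<Longrightarrow> y \<in> I"
  by (metis I_add I_carr sub_add_cancel)
lemma I_sub_cancel2: "x \<in> I \<Longrightarrow> y \<in> carrier R \<Longrightarrow> sub R x y \<in> I \<Longrightarrow> y \<in> I"
  by (metis I_neg I_cancel I_carr neg_closed neg_neg sub_def)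

lemma coset_mem: "z \<in> coset R I x \<longleftrightarrow> (\<exists>q\<in>I. z = add R x q)"
  by (auto simp: coset_def)
lemma coset_self: "x \<in> carrier R \<Longrightarrow> x \<in> coset R I x"
  using I_zero by (force simp: coset_def)
lemma coset_carr: "x \<in> carrier R \<Longrightarrow> coset R I x \<subseteq> carrier R"
  using I_carr by (auto simp: coset_def)

lemma coset_sub: assumes "x \<in> carrier R" "y \<in> carrier R" "sub R x y \<in> I"
  shows "coset R I x \<subseteq> coset R I y"
proof
  fix z assume "z \<in> coset R I x"
  then obtain q where q: "q \<in> I" "z = add R x q" by (auto simp: coset_mem)
  have "z = add R y (add R (sub R x y) q)"
    using q assms I_carr by (metis add_assoc add_comm sub_add_cancel sub_closed)
  thus "z \<in> coset R I y" using q assms I_add by (auto simp: coset_mem)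
qed

lemma sub_swap: "x \<in> carrier R \<Longrightarrow> y \<in> carrier R \<Longrightarrow> sub R y x = neg R (sub R x y)"
  by (simp add: sub_def neg_add add_comm)

lemma coset_eq_iff: assumes "x \<in> carrier R" "y \<in> carrier R"
  shows "coset R I x = coset R I y \<longleftrightarrow> sub R x y \<in> I"
proof
  assume "coset R I x = coset R I y"
  then have "x \<in> coset R I y" using coset_self assms by blast
  then obtain q where q: "q \<in> I" "x = add R y q" by (auto simp: coset_mem)
  then show "sub R x y \<in> I" using assms I_carr by (metis add_comm add_sub_cancel)
next
  assume "sub R x y \<in> I"
  then show "coset R I x = coset R I y"
    using coset_sub assms sub_swap I_neg by (metis subset_antisym)
qed

lemma coset_addI: "x \<in> carrier R \<Longrightarrow> r \<in> I \<Longrightarrow> coset R I (add R x r) = coset R I x"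
  using coset_eq_iff I_carr add_sub_cancel add_comm by (metis add_closed)

lemma coset_zero: "coset R I (zero R) = I"
  using I_carr by (auto simp: coset_def) (metis I_carr add_zero_l)

lemma coset_eq_I: "x \<in> carrier R \<Longrightarrow> coset R I x = I \<longleftrightarrow> x \<in> I"
  using coset_eq_iff[of x "zero R"] by (simp add: coset_zero sub_def)

lemma coset_add: assumes "x \<in> carrier R" "y \<in> carrier R"
  shows "set_add R (coset R I x) (coset R I y) = coset R I (add R x y)"
proof -
  have e1: "add R (add R x q) (add R y q') = add R (add R x y) (add R q q')" if "q \<in> I" "q' \<in> I" for q q'
    using that assms I_carr add_4 by blast
  have e2: "add R (add R x y) q = add R (add R x q) (add R y (zero R))" if "q \<in> I" for q
    using that assms I_carr add_4[of x q y "zero R"] by simp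
  show ?thesis
  proof
    show "set_add R (coset R I x) (coset R I y) \<subseteq> coset R I (add R x y)"
    proof
      fix z assume "z \<in> set_add R (coset R I x) (coset R I y)"
      then obtain q q' where "q \<in> I" "q' \<in> I" "z = add R (add R x q) (add R y q')"
        unfolding set_add_def coset_mem by blast
      then show "z \<in> coset R I (add R x y)" using e1 I_add unfolding coset_mem by metis
    qed
  next
    show "coset R I (add R x y) \<subseteq> set_add R (coset R I x) (coset R I y)"
    proof
      fix z assume "z \<in> coset R I (add R x y)"
      then obtain q where q: "q \<in> I" "z = add R (add R x y) q" unfolding coset_mem by blast
      have "add R x q \<in> coset R I x" "add R y (zero R) \<in> coset R I y"
        using q I_zero unfolding coset_mem by blast+
      then show "z \<in> set_add R (coset R I x) (coset R I y)"
        using q e2 unfolding set_add_def by blast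
    qed
  qed
qed

lemma coset_neg: assumes "y \<in> carrier R"
  shows "neg R ` coset R I y = coset R I (neg R y)"
proof -
  have e1: "neg R (add R y q) = add R (neg R y) (neg R q)" if "q \<in> I" for q
    using that assms I_carr neg_add by blast
  have e2: "add R (neg R y) q = neg R (add R y (neg R q))" if "q \<in> I" for q
    using that assms I_carr neg_add by simp
  show ?thesis
  proof
    show "neg R ` coset R I y \<subseteq> coset R I (neg R y)"
    proof
      fix z assume "z \<in> neg R ` coset R I y"
      then obtain q where q: "q \<in> I" "z = neg R (add R y q)" by (auto simp: coset_def)
      then show "z \<in> coset R I (neg R y)" using e1 I_neg unfolding coset_mem by blast
    qed
    show "coset R I (neg R y) \<subseteq> neg R ` coset R I y"
    proof
      fix z assume "z \<in> coset R I (neg R y)"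
      then obtain q where q: "q \<in> I" "z = add R (neg R y) q" unfolding coset_mem by blast
      have "add R y (neg R q) \<in> coset R I y" using q I_neg unfolding coset_mem by blast
      then show "z \<in> neg R ` coset R I y" using q e2 by blast
    qed
  qed
qed

lemma key: assumes "x \<in> carrier R" "q \<in> I" "q' \<in> I" "z \<in> hmul R (add R x q) (add R x q')"
  shows "\<exists>u\<in>hmul R x x. \<exists>r\<in>I. z = add R u r"
proof -
  have c: "q \<in> carrier R" "q' \<in> carrier R" using assms I_carr by auto
  obtain z1 z2 where z: "z1 \<in> hmul R (add R x q) x" "z2 \<in> hmul R (add R x q) q'" "z = add R z1 z2"
    using distr[of "add R x q" x q'] assms c unfolding set_add_def by auto
  have z2: "z2 \<in> I" using I_mul[of "add R x q" q'] z assms c by auto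
  have "z1 \<in> hmul R x (add R x q)" using z hmul_comm assms c by auto
  then obtain u r1 where u: "u \<in> hmul R x x" "r1 \<in> hmul R x q" "z1 = add R u r1"
    using distr[of x x q] assms c unfolding set_add_def by auto
  have r1: "r1 \<in> I" using I_mul u assms by auto
  have "z = add R u (add R r1 z2)" using z u add_assoc hmul_closed assms c z2 r1 I_carr
    by (metis subsetD)
  thus ?thesis using u r1 z2 I_add by blast
qed

end


context cmh_ideal begin
lemma quot_carrier: "A \<in> carrier (quot R I) \<longleftrightarrow> (\<exists>x\<in>carrier R. A = coset R I x)"
  by (auto simp: quot_def quot_set_def)
lemma quot_zero: "zero (quot R I) = I" by (simp add: quot_def)
lemma quot_hmul: "hmul (quot R I) A B = coset R I ` (\<Union>a\<in>A. \<Union>b\<in>B. hmul R a b)"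
  by (simp add: quot_def)
lemma quot_add: "x \<in> carrier R \<Longrightarrow> y \<in> carrier R \<Longrightarrow>
   add (quot R I) (coset R I x) (coset R I y) = coset R I (add R x y)"
  by (simp add: quot_def coset_add)
lemma quot_sub: "x \<in> carrier R \<Longrightarrow> y \<in> carrier R \<Longrightarrow>
   sub (quot R I) (coset R I x) (coset R I y) = coset R I (sub R x y)"
  by (simp add: quot_def sub_def coset_neg coset_add)
end

locale cmh_PQ = cmh_ideal + fixes P assumes P: "hyperideal R P" and QP: "I \<subseteq> P"
begin
interpretation Pi: cmh_ideal R P by unfold_locales (rule P)

lemma inqP: assumes "x \<in> carrier R"
  shows "coset R I x \<in> quot_set R I P \<longleftrightarrow> x \<in> P"
proof
  assume "coset R I x \<in> quot_set R I P"
  then obtain p where p: "p \<in> P" "coset R I x = coset R I p" by (auto simp: quot_set_def)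
  then have "sub R x p \<in> P" using coset_eq_iff assms Pi.I_carr QP by blast
  then show "x \<in> P" using Pi.I_sub_cancel p assms by blast
qed (auto simp: quot_set_def)

lemma quot_ideal: "hyperideal (quot R I) (quot_set R I P)"
  unfolding hyperideal_def
proof (intro conjI ballI)
  show "quot_set R I P \<subseteq> carrier (quot R I)"
    using Pi.I_sub by (auto simp: quot_def quot_set_def)
  show "quot_set R I P \<noteq> {}" using Pi.I_zero by (auto simp: quot_set_def)
next
  fix X Y assume "X \<in> quot_set R I P" "Y \<in> quot_set R I P"
  then obtain x y where "x \<in> P" "y \<in> P" "X = coset R I x" "Y = coset R I y"
    by (auto simp: quot_set_def)
  then show "sub (quot R I) X Y \<in> quot_set R I P"
    using quot_sub Pi.I_carr Pi.I_sub_closed inqP by auto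
next
  fix r X assume r: "r \<in> carrier (quot R I)" and X: "X \<in> quot_set R I P"
  then obtain a p where ap: "a \<in> carrier R" "p \<in> P" "r = coset R I a" "X = coset R I p"
    by (auto simp: quot_set_def quot_carrier)
  show "hmul (quot R I) r X \<subseteq> quot_set R I P"
  proof
    fix Z assume "Z \<in> hmul (quot R I) r X"
    then obtain a' b z where "a' \<in> coset R I a" "b \<in> coset R I p" "z \<in> hmul R a' b" "Z = coset R I z"
      by (auto simp: quot_hmul ap)
    moreover have "b \<in> P" using calculation QP Pi.I_add ap by (auto simp: coset_mem)
    moreover have "a' \<in> carrier R" using calculation coset_carr ap by blast
    ultimately show "Z \<in> quot_set R I P" using Pi.I_mul by (auto simp: quot_set_def)
  qed
qed

lemma quot_proper: assumes "P \<noteq> carrier R" shows "quot_set R I P \<noteq> carrier (quot R I)"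
proof
  assume e: "quot_set R I P = carrier (quot R I)"
  have "carrier R \<subseteq> P"
  proof
    fix x assume x: "x \<in> carrier R"
    then have "coset R I x \<in> quot_set R I P" using e quot_carrier by auto
    then show "x \<in> P" using inqP x by blast
  qed
  then show False using assms Pi.I_sub by blast
qed

lemma quot_sq_sub: assumes x: "x \<in> carrier R" and y: "y \<in> carrier R"
  and s: "set_sub R (hmul R x x) (hmul R y y) \<subseteq> P"
  shows "set_sub (quot R I) (hmul (quot R I) (coset R I x) (coset R I x))
           (hmul (quot R I) (coset R I y) (coset R I y)) \<subseteq> quot_set R I P"
proof
  fix W assume "W \<in> set_sub (quot R I) (hmul (quot R I) (coset R I x) (coset R I x))
           (hmul (quot R I) (coset R I y) (coset R I y))"
  then obtain a a' b b' z w where ab: "a \<in> coset R I x" "a' \<in> coset R I x" "b \<in> coset R I y" "b' \<in> coset R I y"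
    "z \<in> hmul R a a'" "w \<in> hmul R b b'" "W = sub (quot R I) (coset R I z) (coset R I w)"
    unfolding set_sub_def quot_hmul by blast
  obtain q1 q2 q3 q4 where q: "q1 \<in> I" "q2 \<in> I" "q3 \<in> I" "q4 \<in> I" "a = add R x q1" "a' = add R x q2"
     "b = add R y q3" "b' = add R y q4" using ab by (auto simp: coset_mem)
  obtain u r where ur: "u \<in> hmul R x x" "r \<in> I" "z = add R u r" using key[of x q1 q2 z] q ab x by auto
  obtain v r' where vr: "v \<in> hmul R y y" "r' \<in> I" "w = add R v r'" using key[of y q3 q4 w] q ab y by auto
  have uv: "u \<in> carrier R" "v \<in> carrier R" using ur vr hmul_closed x y by auto
  have "W = coset R I (sub R u v)"
    using ab(7) ur vr uv coset_addI quot_sub I_carr by simp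
  moreover have "sub R u v \<in> P" using s ur vr unfolding set_sub_def by blast
  ultimately show "W \<in> quot_set R I P" by (auto simp: quot_set_def)
qed

lemma part2: assumes "sdf_absorbing R P" shows "sdf_absorbing (quot R I) (quot_set R I P)"
  unfolding sdf_absorbing_def
proof (intro conjI quot_ideal quot_proper ballI impI)
  show "P \<noteq> carrier R" using assms by (simp add: sdf_absorbing_def)
next
  fix A B assume A: "A \<in> carrier (quot R I)" and B: "B \<in> carrier (quot R I)"
    and A0: "A \<noteq> zero (quot R I)" and B0: "B \<noteq> zero (quot R I)"
    and S: "set_sub (quot R I) (hmul (quot R I) A A) (hmul (quot R I) B B) \<subseteq> quot_set R I P"
  obtain x y where xy: "x \<in> carrier R" "y \<in> carrier R" "A = coset R I x" "B = coset R I y"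
    using A B quot_carrier by auto
  have x0: "x \<noteq> zero R" "y \<noteq> zero R" using A0 B0 xy coset_zero quot_zero by auto
  have "set_sub R (hmul R x x) (hmul R y y) \<subseteq> P"
  proof
    fix d assume "d \<in> set_sub R (hmul R x x) (hmul R y y)"
    then obtain u v where uv: "u \<in> hmul R x x" "v \<in> hmul R y y" "d = sub R u v"
      unfolding set_sub_def by blast
    have uvc: "u \<in> carrier R" "v \<in> carrier R" using uv hmul_closed xy by auto
    have "coset R I u \<in> hmul (quot R I) A A" "coset R I v \<in> hmul (quot R I) B B"
      using uv xy coset_self unfolding quot_hmul by blast+
    then have "sub (quot R I) (coset R I u) (coset R I v) \<in> quot_set R I P"
      using S unfolding set_sub_def by blast
    then show "d \<in> P" using quot_sub uvc inqP uv by simp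
  qed
  then have "sub R x y \<in> P \<or> add R x y \<in> P" using assms xy x0 unfolding sdf_absorbing_def by blast
  then show "sub (quot R I) A B \<in> quot_set R I P \<or> add (quot R I) A B \<in> quot_set R I P"
    using xy quot_sub quot_add inqP by simp
qed

lemma core: assumes sdf: "sdf_absorbing (quot R I) (quot_set R I P)" and strict: "I \<subset> P"
  and z: "z \<in> carrier R" and zz: "hmul R z z \<subseteq> P"
  shows "z \<in> P"
proof (rule ccontr)
  assume zP: "z \<notin> P"
  obtain p where p: "p \<in> P" "p \<notin> I" using strict by blast
  have pc: "p \<in> carrier R" using p Pi.I_carr by blast
  let ?a = "add R z p"
  have ac: "?a \<in> carrier R" using z pc by simp
  have aP: "?a \<notin> P" using zP Pi.I_cancel2 p z by blast
  have A: "coset R I ?a \<in> carrier (quot R I)" "coset R I p \<in> carrier (quot R I)"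
    using ac pc quot_carrier by auto
  have A0: "coset R I ?a \<noteq> zero (quot R I)" "coset R I p \<noteq> zero (quot R I)"
    using coset_eq_I ac pc aP p QP quot_zero by auto
  have S: "set_sub (quot R I) (hmul (quot R I) (coset R I ?a) (coset R I ?a))
           (hmul (quot R I) (coset R I p) (coset R I p)) \<subseteq> quot_set R I P"
  proof
    fix W assume "W \<in> set_sub (quot R I) (hmul (quot R I) (coset R I ?a) (coset R I ?a))
           (hmul (quot R I) (coset R I p) (coset R I p))"
    then obtain a a' b b' u w where ab: "a \<in> coset R I ?a" "a' \<in> coset R I ?a" "b \<in> coset R I p" "b' \<in> coset R I p"
      "u \<in> hmul R a a'" "w \<in> hmul R b b'" "W = sub (quot R I) (coset R I u) (coset R I w)"
      unfolding set_sub_def quot_hmul by blast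
    obtain q1 q2 q3 q4 where q: "q1 \<in> I" "q2 \<in> I" "q3 \<in> I" "q4 \<in> I" "a = add R ?a q1" "a' = add R ?a q2"
      "b = add R p q3" "b' = add R p q4" using ab by (auto simp: coset_mem)
    have qc: "q1 \<in> carrier R" "q2 \<in> carrier R" using q I_carr by auto
    have a2: "a = add R z (add R p q1)" "a' = add R z (add R p q2)"
      using q add_assoc z pc qc by auto
    have s: "add R p q1 \<in> P" "add R p q2 \<in> P" using p q QP Pi.I_add by auto
    obtain u0 r where ur: "u0 \<in> hmul R z z" "r \<in> P" "u = add R u0 r"
      using Pi.key[of z "add R p q1" "add R p q2" u] s z ab a2 by auto
    have uP: "u \<in> P" using ur zz Pi.I_add by auto
    have bP: "b \<in> P" "b' \<in> P" using q p QP Pi.I_add by auto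
    have wP: "w \<in> P" using Pi.I_mul[of b b'] bP ab Pi.I_carr by auto
    have "W = coset R I (sub R u w)" using ab quot_sub uP wP Pi.I_carr by simp
    then show "W \<in> quot_set R I P" using uP wP Pi.I_sub_closed by (auto simp: quot_set_def)
  qed
  have "sub (quot R I) (coset R I ?a) (coset R I p) \<in> quot_set R I P \<or>
        add (quot R I) (coset R I ?a) (coset R I p) \<in> quot_set R I P"
    using sdf A A0 S unfolding sdf_absorbing_def by blast
  then have "sub R ?a p \<in> P \<or> add R ?a p \<in> P" using quot_sub quot_add inqP ac pc by simp
  then show False
  proof
    assume "sub R ?a p \<in> P" then show False using add_sub_cancel z pc zP by simp
  next
    assume "add R ?a p \<in> P" then show False using Pi.I_cancel2 p ac aP by blast
  qed
qed

lemma part3: assumes sdf: "sdf_absorbing (quot R I) (quot_set R I P)" and strict: "I \<subset> P"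
  shows "sdf_absorbing R P"
  unfolding sdf_absorbing_def
proof (intro conjI P ballI impI)
  have "quot_set R I P \<noteq> carrier (quot R I)" using sdf unfolding sdf_absorbing_def by blast
  then show "P \<noteq> carrier R" by (auto simp: quot_def)
next
  fix x y assume x: "x \<in> carrier R" and y: "y \<in> carrier R" and "x \<noteq> zero R" "y \<noteq> zero R"
    and S: "set_sub R (hmul R x x) (hmul R y y) \<subseteq> P"
  have S': "sub R u v \<in> P" if "u \<in> hmul R x x" "v \<in> hmul R y y" for u v
    using S that unfolding set_sub_def by blast
  consider "x \<in> I" | "y \<in> I" | "x \<notin> I" "y \<notin> I" by blast
  then show "sub R x y \<in> P \<or> add R x y \<in> P"
  proof cases
    case 1
    then have xP: "x \<in> P" using QP by blast
    have "hmul R y y \<subseteq> P"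
    proof
      fix v assume v: "v \<in> hmul R y y"
      obtain u where u: "u \<in> hmul R x x" using hmul_ne x by blast
      have "u \<in> P" using Pi.I_mul x xP u by blast
      then show "v \<in> P" using Pi.I_sub_cancel2 S' u v hmul_closed y by blast
    qed
    then have "y \<in> P" using core sdf strict y by blast
    then show ?thesis using xP Pi.I_sub_closed by blast
  next
    case 2
    then have yP: "y \<in> P" using QP by blast
    have "hmul R x x \<subseteq> P"
    proof
      fix u assume u: "u \<in> hmul R x x"
      obtain v where v: "v \<in> hmul R y y" using hmul_ne y by blast
      have "v \<in> P" using Pi.I_mul y yP v by blast
      then show "u \<in> P" using Pi.I_sub_cancel S' u v hmul_closed x by blast
    qed
    then have "x \<in> P" using core sdf strict x by blast
    then show ?thesis using yP Pi.I_sub_closed by blast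
  next
    case 3
    have A: "coset R I x \<in> carrier (quot R I)" "coset R I y \<in> carrier (quot R I)"
      using x y quot_carrier by auto
    have A0: "coset R I x \<noteq> zero (quot R I)" "coset R I y \<noteq> zero (quot R I)"
      using coset_eq_I x y 3 quot_zero by auto
    have "sub (quot R I) (coset R I x) (coset R I y) \<in> quot_set R I P \<or>
        add (quot R I) (coset R I x) (coset R I y) \<in> quot_set R I P"
      using sdf A A0 quot_sq_sub[OF x y S] unfolding sdf_absorbing_def by blast
    then show ?thesis using quot_sub quot_add inqP x y by simp
  qed
qed
end

lemma part1:
  assumes H: "comm_mult_hyperring R" and K: "K \<subseteq> carrier R" and HK: "comm_mult_hyperring (R\<lparr>carrier := K\<rparr>)"
    and nK: "\<not> K \<subseteq> P" and sdf: "sdf_absorbing R P"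
  shows "sdf_absorbing (R\<lparr>carrier := K\<rparr>) (P \<inter> K)"
proof -
  interpret cmh R by unfold_locales (rule H)
  interpret Kc: cmh "R\<lparr>carrier := K\<rparr>" by unfold_locales (rule HK)
  have P: "hyperideal R P" using sdf by (simp add: sdf_absorbing_def)
  interpret Pi: cmh_ideal R P by unfold_locales (rule P)
  have subK: "sub (R\<lparr>carrier := K\<rparr>) = sub R" by (simp add: sub_def fun_eq_iff)
  have setsubK: "set_sub (R\<lparr>carrier := K\<rparr>) = set_sub R" by (simp add: set_sub_def subK fun_eq_iff)
  have zK: "zero R \<in> K" using Kc.zero_closed by simp
  show ?thesis unfolding sdf_absorbing_def hyperideal_def
  proof (intro conjI ballI impI)
    show "P \<inter> K \<subseteq> carrier (R\<lparr>carrier := K\<rparr>)" by simp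
    show "P \<inter> K \<noteq> {}" using zK Pi.I_zero by blast
    show "P \<inter> K \<noteq> carrier (R\<lparr>carrier := K\<rparr>)" using nK by auto
  next
    fix x y assume "x \<in> P \<inter> K" "y \<in> P \<inter> K"
    then show "sub (R\<lparr>carrier := K\<rparr>) x y \<in> P \<inter> K"
      using Pi.I_sub_closed Kc.sub_closed[of x y] by (simp add: subK)
  next
    fix r x assume "r \<in> carrier (R\<lparr>carrier := K\<rparr>)" "x \<in> P \<inter> K"
    then show "hmul (R\<lparr>carrier := K\<rparr>) r x \<subseteq> P \<inter> K"
      using Pi.I_mul[of r x] Kc.hmul_closed[of r x] K by auto
  next
    fix x y assume xy: "x \<in> carrier (R\<lparr>carrier := K\<rparr>)" "y \<in> carrier (R\<lparr>carrier := K\<rparr>)"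
      "x \<noteq> zero (R\<lparr>carrier := K\<rparr>)" "y \<noteq> zero (R\<lparr>carrier := K\<rparr>)"
      "set_sub (R\<lparr>carrier := K\<rparr>) (hmul (R\<lparr>carrier := K\<rparr>) x x) (hmul (R\<lparr>carrier := K\<rparr>) y y) \<subseteq> P \<inter> K"
    have sd: "\<forall>x\<in>carrier R. \<forall>y\<in>carrier R. x \<noteq> zero R \<longrightarrow> y \<noteq> zero R \<longrightarrow>
        set_sub R (hmul R x x) (hmul R y y) \<subseteq> P \<longrightarrow> sub R x y \<in> P \<or> add R x y \<in> P"
      using sdf unfolding sdf_absorbing_def by blast
    have "x \<in> carrier R" "y \<in> carrier R" "x \<noteq> zero R" "y \<noteq> zero R" using xy K by auto
    moreover have "set_sub R (hmul R x x) (hmul R y y) \<subseteq> P" using xy(5) setsubK by auto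
    ultimately have "sub R x y \<in> P \<or> add R x y \<in> P" using sd by blast
    then show "sub (R\<lparr>carrier := K\<rparr>) x y \<in> P \<inter> K \<or> add (R\<lparr>carrier := K\<rparr>) x y \<in> P \<inter> K"
      using Kc.sub_closed[of x y] Kc.add_closed[of x y] xy by (auto simp: subK)
  qed
qed

theorem mainTheorem10:
  fixes R :: "'a mhr" and P :: "'a set"
  assumes "comm_mult_hyperring R" and "has_identity R" and "strong_C_hyperideal R P"
  shows "(\<forall>K. K \<subseteq> carrier R \<and> comm_mult_hyperring (R\<lparr>carrier := K\<rparr>) \<and> \<not> K \<subseteq> P \<and>
              sdf_absorbing R P \<longrightarrow> sdf_absorbing (R\<lparr>carrier := K\<rparr>) (P \<inter> K))
       \<and> (\<forall>Q. hyperideal R Q \<and> Q \<subseteq> P \<and> sdf_absorbing R P \<longrightarrow>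
              sdf_absorbing (quot R Q) (quot_set R Q P))
       \<and> (\<forall>Q. hyperideal R Q \<and> Q \<subset> P \<longrightarrow>
              (sdf_absorbing R P \<longleftrightarrow> sdf_absorbing (quot R Q) (quot_set R Q P)))"
proof (intro conjI allI impI)
  have P: "hyperideal R P" using assms(3) by (simp add: strong_C_hyperideal_def)
  fix K assume "K \<subseteq> carrier R \<and> comm_mult_hyperring (R\<lparr>carrier := K\<rparr>) \<and> \<not> K \<subseteq> P \<and> sdf_absorbing R P"
  then show "sdf_absorbing (R\<lparr>carrier := K\<rparr>) (P \<inter> K)" using part1 assms(1) by blast
next
  have P: "hyperideal R P" using assms(3) by (simp add: strong_C_hyperideal_def)
  fix Q assume a: "hyperideal R Q \<and> Q \<subseteq> P \<and> sdf_absorbing R P"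
  have aQ: "hyperideal R Q" "Q \<subseteq> P" using a by auto
  interpret cmh_PQ R Q P by unfold_locales (fact assms(1), fact aQ(1), fact P, fact aQ(2))
  have "sdf_absorbing R P" using a by blast
  then show "sdf_absorbing (quot R Q) (quot_set R Q P)" by (rule part2)
next
  have P: "hyperideal R P" using assms(3) by (simp add: strong_C_hyperideal_def)
  fix Q assume a: "hyperideal R Q \<and> Q \<subset> P"
  have aQ: "hyperideal R Q" "Q \<subseteq> P" using a by auto
  interpret cmh_PQ R Q P by unfold_locales (fact assms(1), fact aQ(1), fact P, fact aQ(2))
  have st: "Q \<subset> P" using a by blast
  show "sdf_absorbing R P \<longleftrightarrow> sdf_absorbing (quot R Q) (quot_set R Q P)"
  proof
    assume "sdf_absorbing R P" then show "sdf_absorbing (quot R Q) (quot_set R Q P)" by (rule part2)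
  next
    assume "sdf_absorbing (quot R Q) (quot_set R Q P)"
    then show "sdf_absorbing R P" using st by (rule part3)
  qed
qed

end
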